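(* Let $G$ be a finite simple graph, and suppose $w_1(u)=c$ for all $u\in V(G)$, where $c$ is a fixed real number. Then for any edge weight function $w$, the multiplicity of $c$ as a root of $\eta_{(w,w_1)}(G,x)$ equals $\mathrm{def}(G)$, the number of vertices left uncovered by a maximum matching of $G$.
   Context: An edge weight function $w$ assigns a nonzero complex number to each edge; induced subgraphs carry restricted weights. For $A\subseteq E(G)$, $w(A)=\prod_{e\in A}w(e)$. $\mu_w(G,x)=\sum_{M}(-1)^{|M|}|w(M)|^2x^{n-2|M|}$ over all matchings $M$ of $G$ (including empty), $n=|V(G)|$. $\eta_{(w,w_1)}(G,x)=\sum_{S\subseteq V(G)}(-1)^{|V(G)\setminus S|}\big(\prod_{y\in V(G)\setminus S}w_1(y)\big)\mu_w(G[S],x)$ with $G[S]$ the induced subgraph and $\mu_w$ of the empty graph equal to $1$. *)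

theory Defs
  imports Complex_Main "HOL-Computational_Algebra.Polynomial"
begin

definition simple_graph :: "'a set \<Rightarrow> 'a set set \<Rightarrow> bool" where
  "simple_graph V E \<longleftrightarrow> finite V \<and>
     (\<forall>e\<in>E. \<exists>u v. e = {u, v} \<and> u \<noteq> v \<and> u \<in> V \<and> v \<in> V)"

definition matchings :: "'a set set \<Rightarrow> 'a set set set" where
  "matchings E = {M. M \<subseteq> E \<and> (\<forall>e1\<in>M. \<forall>e2\<in>M. e1 \<noteq> e2 \<longrightarrow> e1 \<inter> e2 = {})}"

definition induced_edges :: "'a set set \<Rightarrow> 'a set \<Rightarrow> 'a set set" where
  "induced_edges E S = {e \<in> E. e \<subseteq> S}"

definition mu_w :: "'a set \<Rightarrow> 'a set set \<Rightarrow> ('a set \<Rightarrow> complex) \<Rightarrow> complex poly" where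
  "mu_w V E w = (\<Sum>M\<in>matchings E.
      monom ((-1) ^ card M * complex_of_real ((cmod (\<Prod>e\<in>M. w e))\<^sup>2)) (card V - 2 * card M))"

definition eta :: "'a set \<Rightarrow> 'a set set \<Rightarrow> ('a set \<Rightarrow> complex) \<Rightarrow> ('a \<Rightarrow> complex) \<Rightarrow> complex poly" where
  "eta V E w w1 = (\<Sum>S\<in>Pow V.
      [: (-1) ^ card (V - S) * (\<Prod>y\<in>V - S. w1 y) :] * mu_w S (induced_edges E S) w)"

definition matching_number :: "'a set set \<Rightarrow> nat" where
  "matching_number E = Max (card ` matchings E)"

definition deficiency :: "'a set \<Rightarrow> 'a set set \<Rightarrow> nat" where
  "deficiency V E = card V - 2 * matching_number E"

end

theory Submission
  imports Defs
begin

lemma subsets_binom: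
  fixes X C :: "'b::comm_semiring_1"
  assumes "finite U"
  shows "(\<Sum>T\<in>Pow U. X ^ card T * C ^ card (U - T)) = (X + C) ^ card U"
proof -
  have "(X + C) ^ card U = (\<Prod>x\<in>U. X + C)" by simp
  also have "\<dots> = (\<Sum>T\<in>Pow U. (\<Prod>x\<in>T. X) * (\<Prod>x\<in>U - T. C))"
    by (rule prod_add[OF assms])
  also have "\<dots> = (\<Sum>T\<in>Pow U. X ^ card T * C ^ card (U - T))"
    by simp
  finally show ?thesis by simp
qed

lemma matchings_induced:
  "matchings (induced_edges E S) = {M \<in> matchings E. \<Union>M \<subseteq> S}"
  unfolding matchings_def induced_edges_def by blast

lemma card_Union_matching:
  assumes "simple_graph V E" "M \<in> matchings E"
  shows "card (\<Union>M) = 2 * card M" and "\<Union>M \<subseteq> V" and "finite M"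
proof -
  have fV: "finite V" using assms(1) unfolding simple_graph_def by auto
  have ME: "M \<subseteq> E" and dj: "\<forall>e1\<in>M. \<forall>e2\<in>M. e1 \<noteq> e2 \<longrightarrow> e1 \<inter> e2 = {}"
    using assms(2) unfolding matchings_def by auto
  have sub: "\<And>e. e \<in> M \<Longrightarrow> e \<subseteq> V \<and> card e = 2"
    using assms(1) ME unfolding simple_graph_def by fastforce
  show UV: "\<Union>M \<subseteq> V" using sub by blast
  have "M \<subseteq> Pow V" using sub by blast
  then show fM: "finite M" using fV finite_subset by blast
  have "card (\<Union>M) = sum card M"
  proof (rule card_Union_disjoint)
    show "pairwise disjnt M" using dj by (auto simp: pairwise_def disjnt_def)
    fix A assume "A \<in> M" then show "finite A" using sub fV by (meson finite_subset)
  qed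
  also have "\<dots> = sum (\<lambda>_. 2) M" using sub by (intro sum.cong) auto
  finally show "card (\<Union>M) = 2 * card M" by simp
qed

theorem lemma6p6:
  fixes V :: "'a set" and E :: "'a set set"
    and w :: "'a set \<Rightarrow> complex" and w1 :: "'a \<Rightarrow> complex" and c :: real
  assumes "simple_graph V E"
    and "\<forall>e\<in>E. w e \<noteq> 0"
    and "\<forall>u\<in>V. w1 u = complex_of_real c"
  shows "order (complex_of_real c) (eta V E w w1) = deficiency V E"
proof -
  define K where "K = complex_of_real c"
  define X :: "complex poly" where "X = [:0,1:]"
  define C :: "complex poly" where "C = [:-K:]"
  define L :: "complex poly" where "L = [:-K,1:]"
  define a where "a M = (-1) ^ card M * complex_of_real ((cmod (\<Prod>e\<in>M. w e))\<^sup>2)" for M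
  define n where "n = card V"
  have fV: "finite V" using assms(1) unfolding simple_graph_def by auto
  have EV: "E \<subseteq> Pow V" using assms(1) unfolding simple_graph_def by auto
  have fE: "finite E" using EV fV by (meson finite_Pow_iff finite_subset)
  have fME: "finite (matchings E)" using fE unfolding matchings_def by auto
  have XC: "X + C = L" unfolding X_def C_def L_def by simp
  have inner: "(\<Sum>S\<in>{S \<in> Pow V. \<Union>M \<subseteq> S}. [:(-1) ^ card (V - S) * (\<Prod>y\<in>V - S. w1 y):] *
        monom (a M) (card S - 2 * card M)) = smult (a M) (L ^ (n - 2 * card M))"
    if M: "M \<in> matchings E" for M
  proof -
    note cu = card_Union_matching[OF assms(1) M]
    define U where "U = V - \<Union>M"
    have fU: "finite U" using fV U_def by auto
    have cU: "card U = n - 2 * card M" unfolding U_def n_def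
      using cu fV by (simp add: card_Diff_subset finite_subset)
    have "(\<Sum>S\<in>{S \<in> Pow V. \<Union>M \<subseteq> S}. [:(-1) ^ card (V - S) * (\<Prod>y\<in>V - S. w1 y):] *
        monom (a M) (card S - 2 * card M)) =
        (\<Sum>T\<in>Pow U. smult (a M) (X ^ card T * C ^ card (U - T)))"
    proof (rule sum.reindex_bij_witness[where i = "\<lambda>T. \<Union>M \<union> T" and j = "\<lambda>S. S - \<Union>M"])
      fix T assume T: "T \<in> Pow U"
      show "\<Union>M \<union> T - \<Union>M = T" using T U_def by auto
      show "\<Union>M \<union> T \<in> {S \<in> Pow V. \<Union>M \<subseteq> S}" using T U_def cu by auto
    next
      fix S assume S: "S \<in> {S \<in> Pow V. \<Union>M \<subseteq> S}"
      then show "S - \<Union>M \<in> Pow U" "\<Union>M \<union> (S - \<Union>M) = S" using U_def by auto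
      define T where "T = S - \<Union>M"
      have T: "T \<in> Pow U" using S U_def T_def by auto
      have SS: "S = \<Union>M \<union> T" using S T_def by auto
      have d: "V - (\<Union>M \<union> T) = U - T" using U_def by auto
      have fT: "finite T" using T fU finite_subset by auto
      have fUM: "finite (\<Union>M)" using cu fV finite_subset by blast
      have dj: "\<Union>M \<inter> T = {}" using T U_def by auto
      have cS: "card (\<Union>M \<union> T) - 2 * card M = card T"
        using card_Un_disjoint[OF fUM fT dj] cu by simp
      have pw: "(\<Prod>y\<in>U - T. w1 y) = K ^ card (U - T)"
        using assms(3) U_def K_def by (simp add: prod_constant[symmetric] del: prod_constant)
      have pmK: "K ^ card (U - T) * (-1) ^ card (U - T) = (-K) ^ card (U - T)"
        by (subst power_minus) (rule mult.commute)
      have "[:(-1) ^ card (V - (\<Union>M \<union> T)) * (\<Prod>y\<in>V - (\<Union>M \<union> T). w1 y):] *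
        monom (a M) (card (\<Union>M \<union> T) - 2 * card M) = smult (a M) (X ^ card T * C ^ card (U - T))"
        unfolding d cS pw monom_altdef X_def C_def
        by (simp add: poly_const_pow power_mult_distrib power_minus[of K] mult_ac)
      then show "smult (a M) (X ^ card (S - \<Union>M) * C ^ card (U - (S - \<Union>M))) =
        [:(-1) ^ card (V - S) * (\<Prod>y\<in>V - S. w1 y):] * monom (a M) (card S - 2 * card M)"
        unfolding T_def[symmetric] unfolding SS by (rule sym)
    qed
    also have "\<dots> = smult (a M) (\<Sum>T\<in>Pow U. X ^ card T * C ^ card (U - T))"
    proof -
      have e: "\<And>p. smult (a M) p = [:a M:] * p" by simp
      show ?thesis unfolding e by (simp add: sum_distrib_left)
    qed
    also have "\<dots> = smult (a M) (L ^ (n - 2 * card M))"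
      using subsets_binom[OF fU, of X C] XC cU by simp
    finally show ?thesis .
  qed
  have eta_eq: "eta V E w w1 = (\<Sum>M\<in>matchings E. smult (a M) (L ^ (n - 2 * card M)))"
  proof -
    have "eta V E w w1 = (\<Sum>S\<in>Pow V. \<Sum>M\<in>{M \<in> matchings E. \<Union>M \<subseteq> S}.
       [:(-1) ^ card (V - S) * (\<Prod>y\<in>V - S. w1 y):] * monom (a M) (card S - 2 * card M))"
      unfolding eta_def mu_w_def matchings_induced a_def by (simp add: sum_distrib_left)
    also have "\<dots> = (\<Sum>M\<in>matchings E. \<Sum>S\<in>{S \<in> Pow V. \<Union>M \<subseteq> S}.
       [:(-1) ^ card (V - S) * (\<Prod>y\<in>V - S. w1 y):] * monom (a M) (card S - 2 * card M))"
      by (rule sum.swap_restrict) (use fV fME in auto)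
    also have "\<dots> = (\<Sum>M\<in>matchings E. smult (a M) (L ^ (n - 2 * card M)))"
      using inner by (intro sum.cong) auto
    finally show ?thesis .
  qed
  define \<nu> where "\<nu> = matching_number E"
  have emp: "{} \<in> matchings E" unfolding matchings_def by auto
  have le: "card M \<le> \<nu>" if "M \<in> matchings E" for M
    unfolding \<nu>_def matching_number_def using that fME by auto
  obtain M0 where M0: "M0 \<in> matchings E" "card M0 = \<nu>"
    unfolding \<nu>_def matching_number_def using fME emp
    by (metis (mono_tags, lifting) Max_in empty_iff finite_imageI image_iff image_is_empty)
  have twonu: "2 * \<nu> \<le> n"
    using card_Union_matching[OF assms(1) M0(1)] M0(2) fV n_def card_mono by metis
  define d where "d = n - 2 * \<nu>"
  define q where "q = (\<Sum>M\<in>matchings E. smult (a M) (L ^ (2 * (\<nu> - card M))))"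
  have "eta V E w w1 = L ^ d * q"
    unfolding eta_eq q_def sum_distrib_left
  proof (rule sum.cong)
    fix M assume M: "M \<in> matchings E"
    have "n - 2 * card M = d + 2 * (\<nu> - card M)" using le[OF M] twonu d_def by simp
    then show "smult (a M) (L ^ (n - 2 * card M)) = L ^ d * smult (a M) (L ^ (2 * (\<nu> - card M)))"
      by (simp add: power_add)
  qed simp
  have pq: "poly q K = (\<Sum>M\<in>{M \<in> matchings E. card M = \<nu>}. a M)"
  proof -
    have "poly q K = (\<Sum>M\<in>matchings E. if card M = \<nu> then a M else 0)"
      unfolding q_def L_def poly_sum using le by (intro sum.cong) (auto, metis le_antisym not_less le)
    also have "\<dots> = (\<Sum>M\<in>{M \<in> matchings E. card M = \<nu>}. a M)"
      using fME by (simp add: sum.inter_filter)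
    finally show ?thesis .
  qed
  have pos: "(\<Sum>M\<in>{M \<in> matchings E. card M = \<nu>}. (cmod (\<Prod>e\<in>M. w e))\<^sup>2) > 0"
  proof (rule sum_pos2)
    show "finite {M \<in> matchings E. card M = \<nu>}" using fME by auto
    show "M0 \<in> {M \<in> matchings E. card M = \<nu>}" using M0 by auto
    have "(\<Prod>e\<in>M0. w e) \<noteq> 0" using M0(1) assms(2) card_Union_matching(3)[OF assms(1) M0(1)] unfolding matchings_def by (auto simp: prod_zero_iff)
    then show "0 < (cmod (\<Prod>e\<in>M0. w e))\<^sup>2" by simp
  qed auto
  define R where "R = (\<Sum>M\<in>{M \<in> matchings E. card M = \<nu>}. (cmod (\<Prod>e\<in>M. w e))\<^sup>2)"
  have "poly q K = (-1) ^ \<nu> * complex_of_real R"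
    unfolding pq a_def R_def by (simp add: sum_distrib_left)
  moreover have "R \<noteq> 0" using pos R_def by simp
  ultimately have pqn: "poly q K \<noteq> 0" by simp
  then have qn: "q \<noteq> 0" by auto
  have Ln: "L ^ d \<noteq> 0" unfolding L_def by simp
  have "order K (L ^ d * q) = order K (L ^ d) + order K q"
    by (rule order_mult) (use Ln qn in simp)
  also have "\<dots> = d" unfolding L_def order_power_n_n order_0I[OF pqn] by simp
  finally have "order K (L ^ d * q) = d" .
  then show ?thesis unfolding deficiency_def using \<open>eta V E w w1 = L ^ d * q\<close> K_def d_def \<nu>_def n_def by simp
qed

end
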